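(* Let $S\subset\mathbb{Z}_p$ be a set consisting of exactly $p$ points and let $\mu_S=\sum_{s\in S}\delta_s$, where $\delta_s$ is the Dirac measure at $s$. Then for $\xi\in\mathbb{Q}_p$, $\widehat{\mu_S}(\xi)=0$ if and only if $|(s-s')\xi|_p=p$ for all distinct $s,s'\in S$.
   Context: $\mathbb{Q}_p$ is the field of $p$-adic numbers ($p$ prime) with absolute value $|\cdot|_p$ and $\mathbb{Z}_p$ its ring of integers. For $x=\sum_{n\ge v}a_np^n$ ($a_n\in\{0,\dots,p-1\}$) its fractional part is $\{x\}=\sum_{n=v}^{-1}a_np^n$. Let $\chi(x)=e^{2\pi i\{x\}}$ and $\chi_y(x)=\chi(yx)$. The Fourier transform of a finite Borel measure $\mu$ on $\mathbb{Q}_p$ is $\widehat\mu(y)=\int_{\mathbb{Q}_p}\overline{\chi_y(x)}\,d\mu(x)$; in particular $\widehat{\mu_S}(\xi)=\sum_{s\in S}e^{-2\pi i\{s\xi\}}$. *)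

theory Defs
  imports "HOL-Analysis.Analysis" "HOL-Computational_Algebra.Primes"
begin

text \<open>p-adic integers as the inverse limit of Z/p^n Z: x n is the residue of x mod p^n
  (canonical representative in [0, p^n)), with compatible residues.\<close>
definition Zp :: "nat \<Rightarrow> (nat \<Rightarrow> int) set" where
  "Zp p = {x. \<forall>n. 0 \<le> x n \<and> x n < int p ^ n \<and> x (Suc n) mod int p ^ n = x n}"

definition zp_diff :: "nat \<Rightarrow> (nat \<Rightarrow> int) \<Rightarrow> (nat \<Rightarrow> int) \<Rightarrow> (nat \<Rightarrow> int)" where
  "zp_diff p x y = (\<lambda>n. (x n - y n) mod int p ^ n)"

definition zp_mult :: "nat \<Rightarrow> (nat \<Rightarrow> int) \<Rightarrow> (nat \<Rightarrow> int) \<Rightarrow> (nat \<Rightarrow> int)" where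
  "zp_mult p x y = (\<lambda>n. (x n * y n) mod int p ^ n)"

text \<open>p-adic numbers: a pair (k, z) with z in Zp represents p^(-k) * z.
  Every element of Q_p has such representations.\<close>
definition Qp :: "nat \<Rightarrow> (nat \<times> (nat \<Rightarrow> int)) set" where
  "Qp p = {(k, z). z \<in> Zp p}"

definition qp_scale :: "nat \<Rightarrow> (nat \<Rightarrow> int) \<Rightarrow> nat \<times> (nat \<Rightarrow> int) \<Rightarrow> nat \<times> (nat \<Rightarrow> int)" where
  "qp_scale p s xi = (fst xi, zp_mult p s (snd xi))"

text \<open>Fractional part: {p^(-k) z} = (z mod p^k) / p^k.\<close>
definition qp_frac :: "nat \<Rightarrow> nat \<times> (nat \<Rightarrow> int) \<Rightarrow> real" where
  "qp_frac p xi = real_of_int (snd xi (fst xi)) / real p ^ fst xi"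

text \<open>p-adic valuation of a nonzero p-adic integer: the largest n with p^n dividing z.\<close>
definition zp_val :: "nat \<Rightarrow> (nat \<Rightarrow> int) \<Rightarrow> nat" where
  "zp_val p z = (LEAST n. z (Suc n) \<noteq> 0)"

definition qp_abs :: "nat \<Rightarrow> nat \<times> (nat \<Rightarrow> int) \<Rightarrow> real" where
  "qp_abs p xi = (if (\<forall>n. snd xi n = 0) then 0
                  else real p powi (int (fst xi) - int (zp_val p (snd xi))))"

definition qp_chi :: "nat \<Rightarrow> nat \<times> (nat \<Rightarrow> int) \<Rightarrow> complex" where
  "qp_chi p xi = exp (2 * complex_of_real pi * \<i> * complex_of_real (qp_frac p xi))"

definition fourier_muS :: "nat \<Rightarrow> (nat \<Rightarrow> int) set \<Rightarrow> nat \<times> (nat \<Rightarrow> int) \<Rightarrow> complex" where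
  "fourier_muS p S xi = (\<Sum>s\<in>S. cnj (qp_chi p (qp_scale p s xi)))"

end

theory Submission
  imports Defs "HOL-Computational_Algebra.Computational_Algebra"
begin

lemma frob:
  fixes a b :: "'a::comm_ring_1"
  assumes "prime p"
  shows "\<exists>Q. (a+b)^p = a^p + b^p + of_nat p * Q"
proof -
  have p1: "p > 1" using assms prime_gt_1_nat by blast
  have split: "{..p} = insert 0 (insert p {1..<p})" using p1 by auto
  have d: "\<And>k. k \<in> {1..<p} \<Longrightarrow> (p choose k) = p * ((p choose k) div p)"
    using dvd_choose_prime[of _ p] assms by (simp add: dvd_mult_div_cancel)
  define Q where "Q = (\<Sum>k\<in>{1..<p}. of_nat ((p choose k) div p) * a^k * b^(p-k))"
  have "(a+b)^p = (\<Sum>k\<le>p. of_nat (p choose k) * a^k * b^(p-k))"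
    by (rule binomial_ring)
  also have "\<dots> = b^p + a^p + (\<Sum>k\<in>{1..<p}. of_nat (p choose k) * a^k * b^(p-k))"
    unfolding split using p1 by (simp add: sum.insert)
  also have "(\<Sum>k\<in>{1..<p}. of_nat (p choose k) * a^k * b^(p-k)) = of_nat p * Q"
    unfolding Q_def sum_distrib_left
    by (rule sum.cong[OF refl], subst d, auto simp: mult.assoc)
  finally show ?thesis by (auto simp: algebra_simps)
qed

lemma cg_power:
  fixes B Q :: "'a::comm_ring_1"
  shows "\<exists>Q'. (B + of_nat p * Q)^n = B^n + of_nat p * Q'"
proof (induction n)
  case 0 then show ?case by (auto intro: exI[of _ 0])
next
  case (Suc n)
  then obtain Q' where q: "(B + of_nat p * Q)^n = B^n + of_nat p * Q'" by blast
  have "(B + of_nat p * Q)^Suc n = (B^n + of_nat p * Q') * (B + of_nat p * Q)" using q by simp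
  also have "\<dots> = B^Suc n + of_nat p * (Q' * B + B^n * Q + of_nat p * Q' * Q)"
    by (simp add: algebra_simps)
  finally show ?case by blast
qed

lemma X1_pow:
  assumes "prime p"
  shows "\<exists>Q. ([:1,1:] :: int poly)^(p^n) = monom 1 (p^n) + 1 + of_nat p * Q"
proof (induction n)
  case 0 show ?case by (rule exI[of _ 0]) (simp add: monom_Suc one_pCons)
next
  case (Suc n)
  then obtain Q where q: "([:1,1:] :: int poly)^(p^n) = monom 1 (p^n) + 1 + of_nat p * Q" by blast
  obtain Q1 where q1: "(monom 1 (p^n) + 1 + of_nat p * Q)^p = (monom 1 (p^n) + 1 :: int poly)^p + of_nat p * Q1"
    using cg_power by blast
  obtain Q2 where q2: "(monom 1 (p^n) + 1 :: int poly)^p = (monom 1 (p^n))^p + 1^p + of_nat p * Q2"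
    using frob[OF assms] by blast
  have "([:1,1:] :: int poly)^(p^Suc n) = (([:1,1:] :: int poly)^(p^n))^p"
    by (simp add: power_mult[symmetric] mult.commute)
  also have "\<dots> = monom 1 (p^Suc n) + 1 + of_nat p * (Q2 + Q1)"
    unfolding q q1 q2 by (simp add: monom_power algebra_simps mult.commute)
  finally show ?case by blast
qed

lemma conv_mod:
  fixes g h :: "int poly" and q :: int
  assumes "prime q" and gi: "\<not> q dvd coeff g i" and hj: "\<not> q dvd coeff h j"
    and lg: "\<forall>a<i. q dvd coeff g a" and lh: "\<forall>b<j. q dvd coeff h b"
  shows "\<not> q dvd coeff (g*h) (i+j)"
proof
  assume H: "q dvd coeff (g*h) (i+j)"
  have "coeff (g*h) (i+j) = coeff g i * coeff h j + (\<Sum>a\<in>{..i+j}-{i}. coeff g a * coeff h (i+j-a))"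
    unfolding coeff_mult by (subst sum.remove[of _ i]) auto
  moreover have "q dvd (\<Sum>a\<in>{..i+j}-{i}. coeff g a * coeff h (i+j-a))"
  proof (rule dvd_sum)
    fix a assume a: "a \<in> {..i+j}-{i}"
    show "q dvd coeff g a * coeff h (i+j-a)"
    proof (cases "a < i")
      case True then show ?thesis using lg by auto
    next
      case False then have "i+j-a < j" using a by auto
      then show ?thesis using lh by auto
    qed
  qed
  ultimately have "q dvd coeff g i * coeff h j" using H by (simp add: dvd_add_left_iff)
  then show False using assms(1) gi hj by (simp add: prime_dvd_mult_iff)
qed

lemma eisenstein:
  fixes f g h :: "int poly" and q :: int
  assumes q: "prime q" and fgh: "f = g*h" and lead: "\<not> q dvd lead_coeff f"
    and low: "\<forall>i<degree f. q dvd coeff f i" and c0: "\<not> q^2 dvd coeff f 0"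
  shows "degree g = 0 \<or> degree h = 0"
proof (rule ccontr)
  assume "\<not> (degree g = 0 \<or> degree h = 0)"
  then have dg: "degree g > 0" and dh: "degree h > 0" by auto
  have f0: "f \<noteq> 0" using lead by auto
  then have g0: "g \<noteq> 0" and h0: "h \<noteq> 0" using fgh by auto
  have df: "degree f = degree g + degree h" using fgh g0 h0 by (simp add: degree_mult_eq)
  have "lead_coeff f = lead_coeff g * lead_coeff h" using fgh by (simp add: lead_coeff_mult)
  then have lg: "\<not> q dvd lead_coeff g" and lh: "\<not> q dvd lead_coeff h" using lead by auto
  define i where "i = (LEAST i. \<not> q dvd coeff g i)"
  define j where "j = (LEAST j. \<not> q dvd coeff h j)"
  have gi: "\<not> q dvd coeff g i" unfolding i_def by (rule LeastI[of _ "degree g"]) (rule lg)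
  have hj: "\<not> q dvd coeff h j" unfolding j_def by (rule LeastI[of _ "degree h"]) (rule lh)
  have ig: "i \<le> degree g" unfolding i_def by (rule Least_le) (rule lg)
  have jh: "j \<le> degree h" unfolding j_def by (rule Least_le) (rule lh)
  have lgi: "\<forall>a<i. q dvd coeff g a" unfolding i_def using not_less_Least by blast
  have lhj: "\<forall>b<j. q dvd coeff h b" unfolding j_def using not_less_Least by blast
  have "\<not> q dvd coeff f (i+j)" using conv_mod[OF q gi hj lgi lhj] fgh by simp
  then have "\<not> i + j < degree f" using low by auto
  then have "i = degree g" "j = degree h" using ig jh df by auto
  then have "q dvd coeff g 0" "q dvd coeff h 0" using lgi lhj dg dh by auto
  then have "q^2 dvd coeff g 0 * coeff h 0" by (simp add: power2_eq_square mult_dvd_mono)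
  then show False using c0 fgh by (simp add: coeff_mult_0)
qed

definition Phi :: "nat \<Rightarrow> nat \<Rightarrow> int poly" where
  "Phi p m = (\<Sum>j<p. monom 1 (p^m * j))"

lemma coeff_Phi:
  assumes "p > 0"
  shows "coeff (Phi p m) n = (if n mod p^m = 0 \<and> n div p^m < p then 1 else 0)"
proof -
  have M: "p^m > 0" using assms by simp
  have "coeff (Phi p m) n = (\<Sum>j<p. if p^m * j = n then 1 else 0)"
    unfolding Phi_def coeff_sum coeff_monom by simp
  also have "\<dots> = (\<Sum>j<p. if n mod p^m = 0 \<and> j = n div p^m then 1 else 0)"
    by (rule sum.cong[OF refl]) (use M in auto)
  also have "\<dots> = (if n mod p^m = 0 \<and> n div p^m < p then 1 else 0)"
    by (auto simp: sum.delta)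
  finally show ?thesis .
qed

lemma degree_Phi:
  assumes "p > 0"
  shows "degree (Phi p m) = p^m * (p - 1)"
proof (rule antisym)
  show "degree (Phi p m) \<le> p^m * (p - 1)"
  proof (rule degree_le, intro allI impI)
    fix i assume "p ^ m * (p - 1) < i"
    have "\<not> (i mod p^m = 0 \<and> i div p^m < p)"
    proof
      assume h: "i mod p^m = 0 \<and> i div p^m < p"
      have "i = i div p^m * p^m + i mod p^m" by (rule div_mult_mod_eq[symmetric])
      then have "i = p^m * (i div p^m)" using h by (simp only: mult.commute[of "p^m"] add_0_right)
      also have "\<dots> \<le> p^m * (p - 1)" using h by (intro mult_le_mono2) auto
      finally show False using \<open>p ^ m * (p - 1) < i\<close> by simp
    qed
    then show "coeff (Phi p m) i = 0" using coeff_Phi[OF assms] by simp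
  next
  qed
  show "p^m * (p - 1) \<le> degree (Phi p m)"
    by (rule le_degree) (use assms in \<open>simp add: coeff_Phi\<close>)
qed

lemma pcompose_monom1: "pcompose (monom 1 n) q = q ^ n"
  by (induction n) (auto simp: monom_Suc pcompose_pCons pcompose_1)

lemma Phi_compose: "pcompose (Phi p m) [:1,1:] = (\<Sum>j<p. [:1,1:]^(p^m*j))"
  unfolding Phi_def pcompose_sum pcompose_monom1 ..

lemma F_tele: "(\<Sum>j<p. ([:1,1:]::int poly)^(p^m*j)) * ([:1,1:]^(p^m) - 1) = [:1,1:]^(p^Suc m) - 1"
proof -
  have "(\<Sum>j<p. ([:1,1:]::int poly)^(p^m*j)) * ([:1,1:]^(p^m) - 1)
      = (\<Sum>j<p. [:1,1:]^(p^m*Suc j) - [:1,1:]^(p^m*j))"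
    unfolding sum_distrib_right
    by (rule sum.cong[OF refl]) (simp add: left_diff_distrib power_add mult.commute)
  also have "\<dots> = [:1,1:]^(p^m*p) - 1"
    by (subst sum_lessThan_telescope[where f="\<lambda>j. ([:1,1:]::int poly)^(p^m*j)"]) simp
  finally show ?thesis by (simp add: mult.commute)
qed

lemma coeff_F:
  assumes "prime p"
  shows "\<exists>c. coeff (\<Sum>j<p. ([:1,1:]::int poly)^(p^m*j)) i = (if i = p^m*(p-1) then 1 else 0) + int p * c"
proof -
  define F where "F = (\<Sum>j<p. ([:1,1:]::int poly)^(p^m*j))"
  obtain Q1 where q1: "([:1,1:] :: int poly)^(p^m) = monom 1 (p^m) + 1 + of_nat p * Q1"
    using X1_pow[OF assms] by blast
  obtain Q2 where q2: "([:1,1:] :: int poly)^(p^Suc m) = monom 1 (p^Suc m) + 1 + of_nat p * Q2"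
    using X1_pow[OF assms] by blast
  have "F * (monom 1 (p^m) + of_nat p * Q1) = monom 1 (p^Suc m) + of_nat p * Q2"
    using F_tele[of p m] unfolding F_def[symmetric] q1 q2 by simp
  then have e: "monom 1 (p^m) * F = monom 1 (p^Suc m) + of_nat p * (Q2 - F * Q1)"
    by (simp add: algebra_simps)
  have "coeff F i = coeff (monom 1 (p^m) * F) (p^m + i)"
    by (simp add: coeff_monom_mult)
  also have "\<dots> = (if i = p^m*(p-1) then 1 else 0) + int p * coeff (Q2 - F*Q1) (p^m + i)"
  proof -
    have p1: "p \<ge> 1" using assms prime_gt_0_nat by (simp add: Suc_leI)
    have "p^Suc m = p^m*(p-1) + p^m" using p1 by (cases p) auto
    then have "(p * p^m = p^m + i) = (i = p^m*(p-1))" by auto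
    then show ?thesis unfolding e by (simp add: coeff_monom of_nat_poly)
  qed
  finally show ?thesis unfolding F_def by blast
qed

lemma mp_add: "map_poly (of_int::int\<Rightarrow>'a::comm_ring_1) (f+g) = map_poly of_int f + map_poly of_int g"
  by (intro poly_eqI) (simp add: coeff_map_poly)
lemma mp_diff: "map_poly (of_int::int\<Rightarrow>'a::comm_ring_1) (f-g) = map_poly of_int f - map_poly of_int g"
  by (intro poly_eqI) (simp add: coeff_map_poly)
lemma mp_mult: "map_poly (of_int::int\<Rightarrow>'a::comm_ring_1) (f*g) = map_poly of_int f * map_poly of_int g"
  by (intro poly_eqI) (simp add: coeff_map_poly coeff_mult)
lemma mp_smult: "map_poly (of_int::int\<Rightarrow>'a::comm_ring_1) (smult a g) = smult (of_int a) (map_poly of_int g)"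
  by (intro poly_eqI) (simp add: coeff_map_poly)
lemma mp_const: "map_poly (of_int::int\<Rightarrow>'a::comm_ring_1) [:a:] = [:of_int a:]"
  by (intro poly_eqI) (simp add: coeff_map_poly coeff_pCons split: nat.splits)
lemma root_dvd:
  fixes P f :: "int poly" and z :: complex
  assumes pr: "prime_elem P" and dP: "degree P > 0"
    and rP: "poly (map_poly of_int P) z = 0" and rf: "poly (map_poly of_int f) z = 0"
  shows "P dvd f"
proof -
  define ev where "ev h = poly (map_poly (of_int::int\<Rightarrow>complex) h) z" for h
  define S where "S n = (\<exists>g. g \<noteq> 0 \<and> ev g = 0 \<and> degree g = n)" for n
  have P0: "P \<noteq> 0" using dP by auto
  have "S (degree P)" unfolding S_def ev_def using P0 rP by blast
  define n0 where "n0 = (LEAST n. S n)"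
  have "S n0" unfolding n0_def by (rule LeastI) fact
  then obtain g where g0: "g \<noteq> 0" and rg: "ev g = 0" and dg: "degree g = n0" unfolding S_def by blast
  have mini: "\<And>h. h \<noteq> 0 \<Longrightarrow> ev h = 0 \<Longrightarrow> n0 \<le> degree h"
    unfolding n0_def by (rule Least_le) (auto simp: S_def)
  have key: "\<exists>a. a \<noteq> 0 \<and> g dvd smult a h" if rh: "ev h = 0" for h
  proof -
    define r where "r = pseudo_mod h g"
    obtain a q where a: "a \<noteq> 0" and e: "smult a h = g * q + r"
      using pseudo_mod(1)[OF g0, of h] unfolding r_def by blast
    have "ev r = ev (smult a h) - ev (g * q)" using e by (simp add: ev_def mp_add)
    also have "\<dots> = 0" using rh rg by (simp add: ev_def mp_smult mp_mult)
    finally have rr: "ev r = 0" .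
    have "r = 0"
    proof (rule ccontr)
      assume "r \<noteq> 0"
      then have "degree r < degree g" using pseudo_mod(2)[OF g0, of h] unfolding r_def by blast
      with mini[OF \<open>r \<noteq> 0\<close> rr] dg show False by simp
    qed
    then have "g dvd smult a h" using e by simp
    with a show ?thesis by blast
  qed
  obtain a where a: "a \<noteq> 0" "g dvd smult a P" using key[of P] rP unfolding ev_def by blast
  then obtain q where q: "smult a P = g * q" by (auto elim: dvdE)
  have "P dvd g * q" unfolding q[symmetric] by (rule dvd_smult) simp
  then have "P dvd g \<or> P dvd q" using pr by (simp add: prime_elem_dvd_mult_iff)
  moreover have "\<not> P dvd q"
  proof
    assume "P dvd q"
    then obtain q' where q': "q = P * q'" by (auto elim: dvdE)
    have "P * [:a:] = P * (g * q')" using q unfolding q' by (simp add: algebra_simps)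
    then have "[:a:] = g * q'" using mult_left_cancel[OF P0] by blast
    then have ha: "[:a:] = g * q'" .
    then have "q' \<noteq> 0" using a(1) by auto
    then have "degree [:a:] = degree g + degree q'" unfolding ha using g0 by (simp add: degree_mult_eq)
    then have "degree g = 0" by simp
    then obtain c where "g = [:c:]" by (auto elim: degree_eq_zeroE)
    then show False using g0 rg by (simp add: ev_def mp_const)
  qed
  ultimately have Pg: "P dvd g" by blast
  obtain b where b: "b \<noteq> 0" "g dvd smult b f" using key[of f] rf unfolding ev_def by blast
  have "P dvd [:b:] * f" using dvd_trans[OF Pg b(2)] by simp
  then have "P dvd [:b:] \<or> P dvd f" by (rule prime_elem_dvd_multD[OF pr])
  moreover have "\<not> P dvd [:b:]"
  proof
    assume "P dvd [:b:]"
    then have "degree P \<le> degree [:b:]" using b(1) by (intro dvd_imp_degree_le) auto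
    then show False using dP by simp
  qed
  ultimately show ?thesis by blast
qed

lemma unit_of_const_factor:
  fixes a b :: "int poly"
  assumes "Phi p m = a * b" "degree a = 0" "p > 0"
  shows "a dvd 1"
proof -
  obtain c where c: "a = [:c:]" using assms(2) by (auto elim: degree_eq_zeroE)
  have "1 = coeff (Phi p m) 0" using coeff_Phi[OF assms(3), of m 0] assms(3) by simp
  also have "\<dots> = c * coeff b 0" using assms(1) c by (simp add: coeff_mult_0)
  finally have "c dvd 1" by (metis dvdI)
  then show ?thesis using c by (simp add: is_unit_const_poly_iff)
qed

lemma Phi_irred:
  assumes pr: "prime p"
  shows "irreducible (Phi p m)"
proof -
  have p1: "p > 1" using pr prime_gt_1_nat by blast
  then have p0: "p > 0" by simp
  define F where "F = pcompose (Phi p m) [:1,1:]"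
  have dPhi: "degree (Phi p m) = p^m * (p - 1)" using degree_Phi[OF p0] .
  have dpos: "degree (Phi p m) > 0" using dPhi p1 by simp
  have dF: "degree F = p^m * (p - 1)" unfolding F_def by (simp add: degree_pcompose dPhi)
  have FF: "F = (\<Sum>j<p. [:1,1:]^(p^m*j))" unfolding F_def by (rule Phi_compose)
  have ip: "prime (int p)" using pr by simp
  have lead: "\<not> int p dvd lead_coeff F"
  proof
    assume h: "int p dvd lead_coeff F"
    obtain c where "coeff F (p^m*(p-1)) = (if p^m*(p-1) = p^m*(p-1) then 1 else 0) + int p * c"
      using coeff_F[OF pr, of m "p^m*(p-1)"] unfolding FF by blast
    then have "lead_coeff F = 1 + int p * c" using dF by simp
    with h have "int p dvd 1" by (simp add: dvd_add_left_iff)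
    then show False using p1 by simp
  qed
  have low: "\<forall>i<degree F. int p dvd coeff F i"
  proof (intro allI impI)
    fix i assume "i < degree F"
    then have ne: "i \<noteq> p^m*(p-1)" using dF by simp
    obtain c where "coeff F i = (if i = p^m*(p-1) then 1 else 0) + int p * c"
      using coeff_F[OF pr, of m i] unfolding FF by blast
    then show "int p dvd coeff F i" using ne by simp
  qed
  have c0: "coeff F 0 = int p"
  proof -
    have "coeff F 0 = poly F 0" by (simp add: poly_0_coeff_0)
    also have "\<dots> = poly (Phi p m) 1" unfolding F_def by (simp add: poly_pcompose)
    also have "\<dots> = int p" unfolding Phi_def by (simp add: poly_sum poly_monom)
    finally show ?thesis .
  qed
  have c0': "\<not> (int p)^2 dvd coeff F 0"
  proof
    assume "(int p)^2 dvd coeff F 0"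
    then have "int p * int p dvd int p * 1" unfolding c0 by (simp add: power2_eq_square)
    then have "int p dvd 1" using p0 by (subst (asm) dvd_mult_cancel_left) auto
    then show False using p1 by simp
  qed
  show ?thesis
  proof (rule irreducibleI)
    show "Phi p m \<noteq> 0" using dpos by auto
    show "\<not> Phi p m dvd 1" using dpos by (auto simp: is_unit_poly_iff)
    fix a b assume ab: "Phi p m = a * b"
    then have "F = pcompose a [:1,1:] * pcompose b [:1,1:]" unfolding F_def by (simp add: pcompose_mult)
    from eisenstein[OF ip this lead low c0']
    have "degree a = 0 \<or> degree b = 0" by (simp add: degree_pcompose)
    then show "a dvd 1 \<or> b dvd 1"
      using unit_of_const_factor[OF ab _ p0] unit_of_const_factor[of p m b a] ab p0
      by (auto simp: mult.commute)
  qed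
qed

lemma mp_sum: "map_poly (of_int::int\<Rightarrow>'a::comm_ring_1) (sum f A) = (\<Sum>x\<in>A. map_poly of_int (f x))"
  by (intro poly_eqI) (simp add: coeff_map_poly coeff_sum)

lemma root_p_sum:
  assumes "prime p"
  shows "(\<Sum>j<p. exp (2 * of_real pi * \<i> / of_nat p) ^ j) = (0::complex)"
proof -
  define w where "w = exp (2 * of_real pi * \<i> / of_nat p)"
  have p1: "p > 1" using assms prime_gt_1_nat by blast
  have "w ^ p = 1" unfolding w_def using complex_root_unity[of p 1] p1 by simp
  moreover have "w \<noteq> 1" unfolding w_def using complex_root_unity_eq_1[of p 1] p1 by simp
  ultimately show ?thesis unfolding w_def[symmetric]
    using power_diff_1_eq[of w p] by simp
qed

lemma zeta_pow:
  fixes M p :: nat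
  assumes "M > 0" "p > 0"
  shows "exp (2 * of_real pi * \<i> / of_nat (M*p)) ^ (M * j) = exp (2 * of_real pi * \<i> / of_nat p) ^ j"
proof -
  have "exp (2 * of_real pi * \<i> / of_nat (M*p)) ^ (M * j)
      = exp (of_nat (M*j) * (2 * of_real pi * \<i> / of_nat (M*p)))"
    by (rule exp_of_nat_mult[symmetric])
  also have "of_nat (M*j) * (2 * of_real pi * \<i> / of_nat (M*p)) = of_nat j * (2 * of_real pi * \<i> / of_nat p)"
    using assms by (simp add: field_simps)
  also have "exp \<dots> = exp (2 * of_real pi * \<i> / of_nat p) ^ j" by (rule exp_of_nat_mult)
  finally show ?thesis .
qed

lemma core_if:
  fixes S :: "'b set" and A :: "'b \<Rightarrow> nat"
  assumes pr: "prime p" and fin: "finite S" and cS: "card S = p"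
    and AN: "\<forall>s\<in>S. A s < p^m * p"
    and cond: "\<forall>s\<in>S. \<forall>s'\<in>S. s \<noteq> s' \<longrightarrow> A s \<noteq> A s' \<and> A s mod p^m = A s' mod p^m"
  shows "(\<Sum>s\<in>S. exp (2 * of_real pi * \<i> / of_nat (p^m*p)) ^ A s) = (0::complex)"
proof -
  define M where "M = p^m"
  define z where "z = exp (2 * of_real pi * \<i> / of_nat (M*p))"
  have p0: "p > 0" using pr prime_gt_0_nat by blast
  have M0: "M > 0" unfolding M_def using p0 by simp
  have "S \<noteq> {}" using cS p0 by auto
  then obtain s0 where s0: "s0 \<in> S" by blast
  define r where "r = A s0 mod M"
  have rs: "\<forall>s\<in>S. A s mod M = r" using cond s0 unfolding r_def M_def by metis
  define J where "J s = A s div M" for s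
  have AJ: "\<forall>s\<in>S. A s = r + M * J s" using rs unfolding J_def
    by (metis add.commute mult.commute div_mult_mod_eq)
  have inj: "inj_on J S"
  proof (rule inj_onI)
    fix s s' assume "s \<in> S" "s' \<in> S" "J s = J s'"
    then have "A s = A s'" using AJ by metis
    then show "s = s'" using cond \<open>s \<in> S\<close> \<open>s' \<in> S\<close> by blast
  qed
  have sub: "J ` S \<subseteq> {..<p}"
  proof
    fix x assume "x \<in> J ` S"
    then obtain s where "s \<in> S" "x = J s" by blast
    then have "A s < M * p" using AN unfolding M_def by auto
    then show "x \<in> {..<p}" using \<open>x = J s\<close> unfolding J_def by (simp add: div_less_iff_less_mult mult.commute M0)
  qed
  have img: "J ` S = {..<p}"
    by (rule card_subset_eq) (use sub card_image[OF inj] cS in auto)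
  have "(\<Sum>s\<in>S. z ^ A s) = (\<Sum>s\<in>S. z ^ r * (z ^ M) ^ J s)"
    by (rule sum.cong[OF refl]) (simp add: AJ power_add power_mult)
  also have "\<dots> = z ^ r * (\<Sum>s\<in>S. (z ^ M) ^ J s)" by (simp add: sum_distrib_left)
  also have "(\<Sum>s\<in>S. (z ^ M) ^ J s) = (\<Sum>j\<in>J ` S. (z ^ M) ^ j)"
    by (rule sum.reindex[OF inj, symmetric, unfolded comp_def])
  also have "\<dots> = (\<Sum>j<p. exp (2 * of_real pi * \<i> / of_nat p) ^ j)"
    unfolding img z_def by (rule sum.cong[OF refl]) (simp add: zeta_pow[OF M0 p0, symmetric] power_mult)
  also have "\<dots> = 0" by (rule root_p_sum[OF pr])
  finally show ?thesis unfolding z_def M_def by simp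
qed


lemma coeff_Phi_mult:
  assumes p0: "p > 0" and dq: "degree q < p^m" and r: "r < p^m" and j: "j < p"
  shows "coeff (Phi p m * q) (r + p^m * j) = coeff q r"
proof -
  have "coeff (Phi p m * q) (r + p^m * j) = (\<Sum>j'<p. coeff (monom 1 (p^m * j') * q) (r + p^m * j))"
    unfolding Phi_def sum_distrib_right coeff_sum ..
  also have "\<dots> = (\<Sum>j'<p. if j' = j then coeff q r else 0)"
  proof (rule sum.cong[OF refl])
    fix j' assume "j' \<in> {..<p}"
    show "coeff (monom 1 (p^m * j') * q) (r + p^m * j) = (if j' = j then coeff q r else 0)"
    proof (cases "j' \<le> j")
      case True
      then obtain d where d: "j = j' + d" using le_Suc_ex by blast
      have e: "r + p^m * j - p^m * j' = r + p^m * d" unfolding d by (simp add: algebra_simps)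
      have "p^m * j' \<le> p^m * j" using True by (rule mult_le_mono2)
      then have nlt: "\<not> (r + p^m * j < p^m * j')" by linarith
      have gen: "coeff (monom 1 (p^m * j') * q) (r + p^m * j) = coeff q (r + p^m * d)"
        using coeff_monom_mult[of 1 "p^m*j'" q "r + p^m*j"] nlt e by simp
      show ?thesis
      proof (cases "d = 0")
        case True then show ?thesis using d gen by simp
      next
        case False
        have "p^m * 1 \<le> p^m * d" by (rule mult_le_mono2) (use False in simp)
        then have "p^m \<le> p^m * d" by (simp only: mult_1_right)
        then have "r + p^m * d \<ge> p^m" by linarith
        then have "coeff q (r + p^m * d) = 0" using dq by (intro coeff_eq_0) simp
        moreover have "j' \<noteq> j" using d False by simp
        ultimately show ?thesis using gen by simp
      qed
    next
      case False
      then have "p^m * j < p^m * j'" using p0 by simp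
      then have "p^m * j + p^m \<le> p^m * j'" using False
        by (metis Suc_leI add.commute mult_Suc_right mult_le_mono2 not_le)
      then have "r + p^m * j < p^m * j'" using r by simp
      then show ?thesis using False by (simp add: coeff_monom_mult)
    qed
  qed
  also have "\<dots> = coeff q r" using j by simp
  finally show ?thesis .
qed

lemma core_onlyif:
  fixes S :: "'b set" and A :: "'b \<Rightarrow> nat"
  assumes pr: "prime p" and fin: "finite S" and cS: "card S = p"
    and AN: "\<forall>s\<in>S. A s < p^m * p"
    and sum0: "(\<Sum>s\<in>S. exp (2 * of_real pi * \<i> / of_nat (p^m*p)) ^ A s) = (0::complex)"
  shows "\<forall>s\<in>S. \<forall>s'\<in>S. s \<noteq> s' \<longrightarrow> A s \<noteq> A s' \<and> A s mod p^m = A s' mod p^m"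
proof -
  define M where "M = p^m"
  define z where "z = exp (2 * of_real pi * \<i> / of_nat (M*p))"
  have p0: "p > 0" using pr prime_gt_0_nat by blast
  have p1: "p > 1" using pr prime_gt_1_nat by blast
  have M0: "M > 0" unfolding M_def using p0 by simp
  define f where "f = (\<Sum>s\<in>S. monom (1::int) (A s))"
  define c where "c a = card {s\<in>S. A s = a}" for a
  have cf: "coeff f a = int (c a)" for a
  proof -
    have "coeff f a = (\<Sum>s\<in>S. if A s = a then 1 else 0)"
      unfolding f_def coeff_sum coeff_monom by (rule sum.cong) auto
    also have "\<dots> = (\<Sum>s\<in>{s\<in>S. A s = a}. 1)" using sum.inter_filter[OF fin, of "\<lambda>_. (1::int)" "\<lambda>s. A s = a"] by simp
    finally show ?thesis unfolding c_def by simp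
  qed
  have rf: "poly (map_poly of_int f) z = 0"
    unfolding f_def mp_sum using sum0 by (simp add: poly_sum map_poly_monom poly_monom z_def M_def)
  have rP: "poly (map_poly of_int (Phi p m)) z = 0"
  proof -
    have "poly (map_poly of_int (Phi p m)) z = (\<Sum>j<p. z ^ (M * j))"
      unfolding Phi_def mp_sum by (simp add: poly_sum map_poly_monom poly_monom M_def)
    also have "\<dots> = (\<Sum>j<p. exp (2 * of_real pi * \<i> / of_nat p) ^ j)"
      unfolding z_def by (simp only: zeta_pow[OF M0 p0])
    also have "\<dots> = 0" by (rule root_p_sum[OF pr])
    finally show ?thesis .
  qed
  have dPhi: "degree (Phi p m) = M * (p - 1)" using degree_Phi[OF p0] unfolding M_def .
  have "Phi p m dvd f"
    by (rule root_dvd[OF irreducible_imp_prime_poly[OF Phi_irred[OF pr]] _ rP rf]) (use dPhi M0 p1 in simp)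
  then obtain q where fq: "f = Phi p m * q" by (auto elim: dvdE)
  have "S \<noteq> {}" using cS p0 by auto
  then obtain s0 where s0: "s0 \<in> S" by blast
  have "c (A s0) \<ge> 1" unfolding c_def using fin s0
    by (metis (mono_tags, lifting) One_nat_def Suc_leI card_gt_0_iff empty_iff finite_subset mem_Collect_eq subsetI)
  then have f0: "f \<noteq> 0" using cf[of "A s0"] by auto
  have dfle: "degree f \<le> M * p - 1"
  proof (rule degree_le, intro allI impI)
    fix i assume "M * p - 1 < i"
    then have "{s\<in>S. A s = i} = {}" using AN unfolding M_def by auto
    then have "c i = 0" unfolding c_def by (simp only: card.empty)
    then show "coeff f i = 0" using cf[of i] by simp
  qed
  have q0: "q \<noteq> 0" using f0 fq by auto
  have Phi0: "Phi p m \<noteq> 0" using dPhi M0 p1 by auto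
  have "degree f = M * (p - 1) + degree q" unfolding fq using degree_mult_eq[OF Phi0 q0] dPhi by simp
  have Mp: "M * p = M * (p - 1) + M" using p0 by (cases p) auto
  have dq: "degree q < M" using dfle \<open>degree f = M * (p - 1) + degree q\<close> Mp M0 by linarith
  have cq: "int (c (r + M * j)) = coeff q r" if "r < M" "j < p" for r j
    using coeff_Phi_mult[OF p0 dq[unfolded M_def] that[unfolded M_def]] fq cf unfolding M_def by simp
  have main: "c (A s) = 1 \<and> (\<forall>s'\<in>S. A s' mod M = A s mod M)" if sS: "s \<in> S" for s
  proof -
    define r where "r = A s mod M"
    have rM: "r < M" unfolding r_def using M0 by simp
    have As: "A s = r + M * (A s div M)" unfolding r_def by simp
    have "A s < p * M" using AN sS unfolding M_def by (simp add: mult.commute)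
    then have js: "A s div M < p" by (simp add: div_less_iff_less_mult[OF M0])
    have cj: "c (r + M * j) = c (A s)" if "j < p" for j
      using cq[OF rM that] cq[OF rM js] As by simp
    define T where "T = {s'\<in>S. A s' mod M = r}"
    have TU: "T = (\<Union>j\<in>{..<p}. {s'\<in>S. A s' = r + M * j})"
    proof (rule set_eqI, rule iffI)
      fix x assume "x \<in> T"
      then have xS: "x \<in> S" and xr: "A x mod M = r" unfolding T_def by auto
      have "A x = r + M * (A x div M)" using xr by (metis add.commute div_mult_mod_eq mult.commute)
      moreover have "A x div M < p"
      proof -
        have "A x < p * M" using AN xS unfolding M_def by (simp add: mult.commute)
        then show ?thesis by (simp add: div_less_iff_less_mult[OF M0])
      qed
      ultimately show "x \<in> (\<Union>j\<in>{..<p}. {s'\<in>S. A s' = r + M * j})" using xS by blast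
    next
      fix x assume "x \<in> (\<Union>j\<in>{..<p}. {s'\<in>S. A s' = r + M * j})"
      then obtain j where "x \<in> S" "A x = r + M * j" by blast
      then show "x \<in> T" unfolding T_def using rM by simp
    qed
    have "card T = (\<Sum>j<p. card {s'\<in>S. A s' = r + M * j})"
      unfolding TU by (rule card_UN_disjoint) (use fin M0 in auto)
    also have "\<dots> = (\<Sum>j<p. c (A s))" by (rule sum.cong[OF refl]) (simp add: cj[unfolded c_def] c_def)
    also have "\<dots> = p * c (A s)" by simp
    finally have cT: "card T = p * c (A s)" .
    have TS: "T \<subseteq> S" unfolding T_def by auto
    then have "card T \<le> p" using card_mono[OF fin TS] cS by simp
    then have c1: "c (A s) \<le> 1" using cT p0 by simp
    have "s \<in> {s'\<in>S. A s' = A s}" using sS by simp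
    moreover have "finite {s'\<in>S. A s' = A s}" using fin by simp
    ultimately have "card {s'\<in>S. A s' = A s} > 0" using card_gt_0_iff by blast
    then have "c (A s) \<ge> 1" unfolding c_def by simp
    with c1 have cA: "c (A s) = 1" by simp
    then have "card T = card S" using cT cS by simp
    then have "T = S" using card_subset_eq[OF fin TS] by simp
    then show ?thesis using cA unfolding T_def r_def by auto
  qed
  show ?thesis
  proof (intro ballI impI)
    fix s s' assume sS: "s \<in> S" and s'S: "s' \<in> S" and ne: "s \<noteq> s'"
    have m: "A s mod p^m = A s' mod p^m" using main[OF sS] s'S unfolding M_def by simp
    have "A s \<noteq> A s'"
    proof
      assume eq: "A s = A s'"
      have "{s, s'} \<subseteq> {x\<in>S. A x = A s}" using sS s'S eq by auto
      then have "card {s, s'} \<le> c (A s)" unfolding c_def by (rule card_mono[rotated]) (use fin in simp)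
      then show False using ne main[OF sS] by simp
    qed
    then show "A s \<noteq> A s' \<and> A s mod p^m = A s' mod p^m" using m by simp
  qed
qed

lemma Zp_mult_in: assumes "p > 0" "x \<in> Zp p" "y \<in> Zp p" shows "zp_mult p x y \<in> Zp p"
proof -
  have "zp_mult p x y (Suc n) mod int p ^ n = zp_mult p x y n" for n
  proof -
    have "zp_mult p x y (Suc n) mod int p ^ n = (x (Suc n) * y (Suc n)) mod int p ^ n"
      unfolding zp_mult_def by (simp add: mod_mod_cancel le_imp_power_dvd)
    also have "\<dots> = ((x (Suc n) mod int p ^ n) * (y (Suc n) mod int p ^ n)) mod int p ^ n"
      by (simp add: mod_mult_eq)
    also have "\<dots> = zp_mult p x y n" using assms unfolding Zp_def zp_mult_def by simp
    finally show ?thesis .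
  qed
  then show ?thesis using assms(1) unfolding Zp_def zp_mult_def by simp
qed

lemma Zp_diff_in: assumes "p > 0" "x \<in> Zp p" "y \<in> Zp p" shows "zp_diff p x y \<in> Zp p"
proof -
  have "zp_diff p x y (Suc n) mod int p ^ n = zp_diff p x y n" for n
  proof -
    have "zp_diff p x y (Suc n) mod int p ^ n = (x (Suc n) - y (Suc n)) mod int p ^ n"
      unfolding zp_diff_def by (simp add: mod_mod_cancel le_imp_power_dvd)
    also have "\<dots> = ((x (Suc n) mod int p ^ n) - (y (Suc n) mod int p ^ n)) mod int p ^ n"
      by (simp add: mod_diff_eq)
    also have "\<dots> = zp_diff p x y n" using assms unfolding Zp_def zp_diff_def by simp
    finally show ?thesis .
  qed
  then show ?thesis using assms(1) unfolding Zp_def zp_diff_def by simp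
qed

lemma Zp_compat: assumes "x \<in> Zp p" "n \<le> n'" shows "x n' mod int p ^ n = x n"
  using assms(2)
proof (induction n' rule: dec_induct)
  case base
  have "0 \<le> x n" "x n < int p ^ n" using assms(1) unfolding Zp_def by auto
  then show ?case by (rule mod_pos_pos_trivial)
next
  case (step n')
  have "x (Suc n') mod int p ^ n = (x (Suc n') mod int p ^ n') mod int p ^ n"
    using step(1) by (simp add: mod_mod_cancel le_imp_power_dvd)
  also have "\<dots> = x n" using assms(1) step(3) unfolding Zp_def by simp
  finally show ?case .
qed

lemma powi_eq_self:
  fixes b :: real assumes "b > 1" shows "b powi e = b \<longleftrightarrow> e = 1"
proof (cases "e \<ge> 0")
  case True
  then have "b powi e = b ^ nat e" by (simp add: power_int_def)
  moreover have "b ^ nat e = b ^ 1 \<longleftrightarrow> nat e = 1" using assms by (rule power_inject_exp)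
  ultimately show ?thesis using True by auto
next
  case False
  then have "b powi e = inverse b ^ nat (-e)" by (simp add: power_int_def)
  moreover have "inverse b ^ nat (-e) \<le> 1" using assms by (intro power_le_one) (auto simp: inverse_le_1_iff)
  ultimately show ?thesis using False assms by auto
qed

lemma Zp_zero0:
  assumes "x \<in> Zp p" shows "x 0 = 0"
proof -
  have "0 \<le> x 0" "x 0 < int p ^ 0" using assms unfolding Zp_def by blast+
  then show ?thesis by simp
qed

lemma abs_pair:
  assumes p1: "p > 1" and dZ: "d \<in> Zp p"
  shows "qp_abs p (Suc m, d) = real p \<longleftrightarrow> d (Suc m) \<noteq> 0 \<and> d m = 0"
proof
  assume h: "qp_abs p (Suc m, d) = real p"
  have nz: "\<not> (\<forall>n. d n = 0)"
  proof
    assume "\<forall>n. d n = 0" then have "qp_abs p (Suc m, d) = 0" unfolding qp_abs_def by simp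
    then show False using h p1 by simp
  qed
  have "qp_abs p (Suc m, d) = real p powi (int (Suc m) - int (zp_val p d))"
    by (simp only: qp_abs_def fst_conv snd_conv if_not_P[OF nz])
  then have "real p powi (int (Suc m) - int (zp_val p d)) = real p" using h by simp
  then have "int (Suc m) - int (zp_val p d) = 1" using powi_eq_self[of "real p"] p1 by simp
  then have v: "zp_val p d = m" by simp
  obtain n where "d n \<noteq> 0" using nz by blast
  then have "d (Suc n) \<noteq> 0" using Zp_compat[OF dZ, of n "Suc n"] by auto
  then have "d (Suc (zp_val p d)) \<noteq> 0" unfolding zp_val_def by (rule LeastI)
  then have A: "d (Suc m) \<noteq> 0" using v by simp
  have B: "d m = 0"
  proof (cases m)
    case 0 then show ?thesis using Zp_zero0[OF dZ] by simp
  next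
    case (Suc m')
    have "m' < zp_val p d" using v Suc by simp
    then have "\<not> d (Suc m') \<noteq> 0" unfolding zp_val_def by (rule not_less_Least)
    then show ?thesis using Suc by simp
  qed
  show "d (Suc m) \<noteq> 0 \<and> d m = 0" using A B by simp
next
  assume h: "d (Suc m) \<noteq> 0 \<and> d m = 0"
  have v: "zp_val p d = m" unfolding zp_val_def
  proof (rule Least_equality)
    show "d (Suc m) \<noteq> 0" using h by simp
    fix n assume dn: "d (Suc n) \<noteq> 0"
    show "m \<le> n"
    proof (rule ccontr)
      assume "\<not> m \<le> n"
      then have "Suc n \<le> m" by simp
      then have "d (Suc n) = d m mod int p ^ Suc n" using Zp_compat[OF dZ, of "Suc n" m] by (simp only: eq_commute)
      then show False using dn h by simp
    qed
  qed
  have nz: "\<not> (\<forall>n. d n = 0)" using h by blast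
  have "qp_abs p (Suc m, d) = real p powi (int (Suc m) - int (zp_val p d))"
    by (simp only: qp_abs_def fst_conv snd_conv if_not_P[OF nz])
  then show "qp_abs p (Suc m, d) = real p" using v by simp
qed

lemma diff_val:
  assumes p0: "p > 0" and sZ: "s \<in> Zp p" and s'Z: "s' \<in> Zp p" and zZ: "z \<in> Zp p"
  shows "(zp_mult p (zp_diff p s s') z (Suc m) \<noteq> 0 \<and> zp_mult p (zp_diff p s s') z m = 0) \<longleftrightarrow>
         (nat (zp_mult p s z (Suc m)) \<noteq> nat (zp_mult p s' z (Suc m)) \<and>
          nat (zp_mult p s z (Suc m)) mod p^m = nat (zp_mult p s' z (Suc m)) mod p^m)"
proof -
  define d where "d = zp_mult p (zp_diff p s s') z"
  define a where "a = zp_mult p s z (Suc m)"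
  define a' where "a' = zp_mult p s' z (Suc m)"
  define N where "N = int p ^ Suc m"
  have N0: "N > 0" unfolding N_def using p0 by simp
  have dZ: "d \<in> Zp p" unfolding d_def by (intro Zp_mult_in Zp_diff_in p0 sZ s'Z zZ)
  have ar: "0 \<le> a" "a < N" unfolding a_def N_def zp_mult_def using p0 by simp_all
  have ar': "0 \<le> a'" "a' < N" unfolding a'_def N_def zp_mult_def using p0 by simp_all
  have dk: "d (Suc m) = (a - a') mod N"
  proof -
    have "d (Suc m) = ((s (Suc m) - s' (Suc m)) mod N * z (Suc m)) mod N"
      unfolding d_def zp_mult_def zp_diff_def N_def ..
    also have "\<dots> = (s (Suc m) * z (Suc m) - s' (Suc m) * z (Suc m)) mod N"
      by (simp add: mod_mult_left_eq left_diff_distrib)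
    also have "\<dots> = (a - a') mod N" unfolding a_def a'_def zp_mult_def N_def[symmetric]
      by (simp add: mod_diff_eq)
    finally show ?thesis .
  qed
  have pmN: "int p ^ m dvd N" unfolding N_def by (simp add: le_imp_power_dvd)
  have dm: "d m = (a - a') mod int p ^ m"
  proof -
    have "d m = d (Suc m) mod int p ^ m" using Zp_compat[OF dZ, of m "Suc m"] by simp
    also have "\<dots> = (a - a') mod int p ^ m" unfolding dk using pmN by (simp add: mod_mod_cancel)
    finally show ?thesis .
  qed
  have e1: "d (Suc m) = 0 \<longleftrightarrow> a = a'"
  proof -
    have "d (Suc m) = 0 \<longleftrightarrow> a mod N = a' mod N" unfolding dk by (simp add: mod_eq_dvd_iff mod_eq_0_iff_dvd)
    also have "\<dots> \<longleftrightarrow> a = a'" using ar ar' by simp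
    finally show ?thesis .
  qed
  have e2: "d m = 0 \<longleftrightarrow> a mod int p ^ m = a' mod int p ^ m"
    unfolding dm by (simp only: mod_eq_dvd_iff mod_eq_0_iff_dvd)
  have n1: "nat a = nat a' \<longleftrightarrow> a = a'" using ar(1) ar'(1) by (rule eq_nat_nat_iff)
  have n2: "nat a mod p^m = nat a' mod p^m \<longleftrightarrow> a mod int p ^ m = a' mod int p ^ m"
  proof -
    have "nat a mod p^m = nat a' mod p^m \<longleftrightarrow> int (nat a mod p^m) = int (nat a' mod p^m)"
      by (rule of_nat_eq_iff[symmetric])
    also have "\<dots> \<longleftrightarrow> a mod int p ^ m = a' mod int p ^ m" using ar ar' by (simp add: of_nat_mod)
    finally show ?thesis .
  qed
  show ?thesis unfolding d_def[symmetric] a_def[symmetric] a'_def[symmetric] using e1 e2 n1 n2 by blast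
qed

lemma exp_frac:
  assumes "p > 0"
  shows "exp (2 * complex_of_real pi * \<i> * complex_of_real (real_of_int (int a) / real p ^ k))
       = exp (2 * complex_of_real pi * \<i> / of_nat (p^k)) ^ a"
proof -
  have "exp (2 * complex_of_real pi * \<i> / of_nat (p^k)) ^ a = exp (of_nat a * (2 * complex_of_real pi * \<i> / of_nat (p^k)))"
    by (rule exp_of_nat_mult[symmetric])
  also have "of_nat a * (2 * complex_of_real pi * \<i> / of_nat (p^k)) = 2 * complex_of_real pi * \<i> * complex_of_real (real_of_int (int a) / real p ^ k)"
    using assms by (simp add: field_simps)
  finally show ?thesis by simp
qed

theorem lemma2p4:
  fixes p :: nat and S :: "(nat \<Rightarrow> int) set" and xi :: "nat \<times> (nat \<Rightarrow> int)"
  assumes "prime p" and "S \<subseteq> Zp p" and "finite S" and "card S = p" and "xi \<in> Qp p"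
  shows "fourier_muS p S xi = 0 \<longleftrightarrow>
         (\<forall>s\<in>S. \<forall>s'\<in>S. s \<noteq> s' \<longrightarrow> qp_abs p (qp_scale p (zp_diff p s s') xi) = real p)"
proof -
  have p1: "p > 1" using assms(1) prime_gt_1_nat by blast
  then have p0: "p > 0" by simp
  obtain k z where xi: "xi = (k, z)" and zZ: "z \<in> Zp p" using assms(5) unfolding Qp_def by auto
  define A where "A s = nat (zp_mult p s z k)" for s
  have Aint: "int (A s) = zp_mult p s z k" for s
    unfolding A_def zp_mult_def using p0 by simp
  have Alt: "\<forall>s\<in>S. A s < p^k"
  proof
    fix s assume "s \<in> S"
    have "zp_mult p s z k < int p ^ k" unfolding zp_mult_def using p0 by simp
    then have "int (A s) < int (p^k)" using Aint[of s] by simp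
    then show "A s < p^k" by linarith
  qed
  define w where "w = exp (2 * complex_of_real pi * \<i> / of_nat (p^k))"
  define E where "E = (\<Sum>s\<in>S. w ^ A s)"
  have "fourier_muS p S xi = (\<Sum>s\<in>S. cnj (w ^ A s))"
    unfolding fourier_muS_def
  proof (rule sum.cong[OF refl])
    fix s assume "s \<in> S"
    have "qp_chi p (qp_scale p s xi) = exp (2 * complex_of_real pi * \<i> * complex_of_real (real_of_int (int (A s)) / real p ^ k))"
      unfolding qp_chi_def qp_frac_def qp_scale_def xi Aint by simp
    also have "\<dots> = w ^ A s" unfolding w_def by (rule exp_frac[OF p0])
    finally show "cnj (qp_chi p (qp_scale p s xi)) = cnj (w ^ A s)" by simp
  qed
  also have "\<dots> = cnj E" unfolding E_def by (simp add: cnj_sum)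
  finally have four: "fourier_muS p S xi = 0 \<longleftrightarrow> E = 0" by simp
  show ?thesis
  proof (cases k)
    case 0
    have "w = 1" unfolding w_def 0 by simp
    then have "E = of_nat p" unfolding E_def using assms(4) by simp
    then have L: "fourier_muS p S xi \<noteq> 0" using four p0 by simp
    have "S \<noteq> {}" using assms(4) p0 by auto
    then obtain s where sS: "s \<in> S" by blast
    have "card (S - {s}) = p - 1" using assms(3,4) sS by simp
    then have "card (S - {s}) > 0" using p1 by simp
    then have "S - {s} \<noteq> {}" using card_gt_0_iff by blast
    then obtain s' where s'S: "s' \<in> S" and ne: "s \<noteq> s'" by blast
    have "qp_abs p (qp_scale p (zp_diff p s s') xi) \<noteq> real p"
    proof
      assume h: "qp_abs p (qp_scale p (zp_diff p s s') xi) = real p"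
      define d where "d = zp_mult p (zp_diff p s s') z"
      have h2: "qp_abs p (0, d) = real p" using h unfolding qp_scale_def xi 0 d_def by simp
      have nz: "\<not> (\<forall>n. d n = 0)"
      proof
        assume "\<forall>n. d n = 0" then have "qp_abs p (0, d) = 0" unfolding qp_abs_def by simp
        then show False using h2 p1 by simp
      qed
      have "qp_abs p (0, d) = real p powi (int 0 - int (zp_val p d))"
        by (simp only: qp_abs_def fst_conv snd_conv if_not_P[OF nz])
      then have "real p powi (int 0 - int (zp_val p d)) = real p" using h2 by simp
      then have "int 0 - int (zp_val p d) = 1" using powi_eq_self[of "real p"] p1 by simp
      then show False by simp
    qed
    then show ?thesis using L sS s'S ne by blast
  next
    case (Suc m)
    have wE: "E = (\<Sum>s\<in>S. exp (2 * of_real pi * \<i> / of_nat (p^m*p)) ^ A s)"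
      unfolding E_def w_def Suc by (simp only: power_Suc2)
    have AN: "\<forall>s\<in>S. A s < p^m * p" using Alt unfolding Suc by (simp add: mult.commute)
    have L: "fourier_muS p S xi = 0 \<longleftrightarrow>
        (\<forall>s\<in>S. \<forall>s'\<in>S. s \<noteq> s' \<longrightarrow> A s \<noteq> A s' \<and> A s mod p^m = A s' mod p^m)"
      unfolding four wE
      using core_if[OF assms(1,3,4) AN] core_onlyif[OF assms(1,3,4) AN] by blast
    have R: "qp_abs p (qp_scale p (zp_diff p s s') xi) = real p \<longleftrightarrow> A s \<noteq> A s' \<and> A s mod p^m = A s' mod p^m"
      if "s \<in> S" "s' \<in> S" for s s'
    proof -
      have sZ: "s \<in> Zp p" "s' \<in> Zp p" using that assms(2) by auto
      have dZ: "zp_mult p (zp_diff p s s') z \<in> Zp p" by (intro Zp_mult_in Zp_diff_in p0 sZ zZ)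
      have eq: "qp_scale p (zp_diff p s s') xi = (Suc m, zp_mult p (zp_diff p s s') z)"
        unfolding qp_scale_def xi Suc by simp
      have "qp_abs p (Suc m, zp_mult p (zp_diff p s s') z) = real p \<longleftrightarrow>
          (zp_mult p (zp_diff p s s') z (Suc m) \<noteq> 0 \<and> zp_mult p (zp_diff p s s') z m = 0)"
        by (rule abs_pair[OF p1 dZ])
      also have "\<dots> \<longleftrightarrow> (nat (zp_mult p s z (Suc m)) \<noteq> nat (zp_mult p s' z (Suc m)) \<and>
          nat (zp_mult p s z (Suc m)) mod p^m = nat (zp_mult p s' z (Suc m)) mod p^m)"
        by (rule diff_val[OF p0 sZ zZ])
      finally show ?thesis unfolding eq A_def Suc .
    qed
    show ?thesis unfolding L using R by blast
  qed
qed

end
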